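(* Let $\mathfrak g$ be a nonsemisimple complex Lie algebra, $\mathfrak p$ a nonperfect ideal of $\mathfrak g$, and $\phi:\mathfrak p\to\mathbb C$ a Lie algebra homomorphism. Then $\phi$ is extendable if and only if $[\mathfrak g^{\phi},\mathfrak g^{\phi}]\cap\mathfrak p\subseteq\ker\phi$.
   Context: A Lie algebra homomorphism to $\mathbb C$ is a linear map vanishing on the derived subalgebra. The Whittaker annihilator is $\mathfrak g^{\phi}=\{g\in\mathfrak g:\phi([g,p])=0\ \forall p\in\mathfrak p\}$, a subalgebra of $\mathfrak g$ containing $\mathfrak p$. $\phi$ is called extendable if there exists a Lie algebra homomorphism $\phi':\mathfrak g^\phi\to\mathbb C$ with $\phi'|_{\mathfrak p}=\phi$. *)

theory Defs
  imports Complex_Main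
begin

text \<open>The whole Lie algebra g is the carrier UNIV of the type.\<close>

definition lie_algebra :: "(complex \<Rightarrow> 'a::ab_group_add \<Rightarrow> 'a) \<Rightarrow> ('a \<Rightarrow> 'a \<Rightarrow> 'a) \<Rightarrow> bool" where
  "lie_algebra sc br \<longleftrightarrow>
     vector_space sc \<and>
     (\<forall>y. Vector_Spaces.linear sc sc (\<lambda>x. br x y)) \<and>
     (\<forall>x. Vector_Spaces.linear sc sc (\<lambda>y. br x y)) \<and>
     (\<forall>x. br x x = 0) \<and>
     (\<forall>x y z. br x (br y z) + br y (br z x) + br z (br x y) = 0)"

definition fin_dim_lie :: "(complex \<Rightarrow> 'a::ab_group_add \<Rightarrow> 'a) \<Rightarrow> bool" where
  "fin_dim_lie sc \<longleftrightarrow> (\<exists>B. finite B \<and> module.span sc B = UNIV)"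

definition lie_br_set :: "(complex \<Rightarrow> 'a::ab_group_add \<Rightarrow> 'a) \<Rightarrow> ('a \<Rightarrow> 'a \<Rightarrow> 'a) \<Rightarrow> 'a set \<Rightarrow> 'a set \<Rightarrow> 'a set" where
  "lie_br_set sc br A B = module.span sc {br a b | a b. a \<in> A \<and> b \<in> B}"

definition lie_subalgebra :: "(complex \<Rightarrow> 'a::ab_group_add \<Rightarrow> 'a) \<Rightarrow> ('a \<Rightarrow> 'a \<Rightarrow> 'a) \<Rightarrow> 'a set \<Rightarrow> bool" where
  "lie_subalgebra sc br S \<longleftrightarrow> module.subspace sc S \<and> (\<forall>x\<in>S. \<forall>y\<in>S. br x y \<in> S)"

definition lie_ideal :: "(complex \<Rightarrow> 'a::ab_group_add \<Rightarrow> 'a) \<Rightarrow> ('a \<Rightarrow> 'a \<Rightarrow> 'a) \<Rightarrow> 'a set \<Rightarrow> bool" where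
  "lie_ideal sc br I \<longleftrightarrow> module.subspace sc I \<and> (\<forall>x. \<forall>y\<in>I. br x y \<in> I)"

definition perfect :: "(complex \<Rightarrow> 'a::ab_group_add \<Rightarrow> 'a) \<Rightarrow> ('a \<Rightarrow> 'a \<Rightarrow> 'a) \<Rightarrow> 'a set \<Rightarrow> bool" where
  "perfect sc br S \<longleftrightarrow> lie_br_set sc br S S = S"

fun derived_series :: "(complex \<Rightarrow> 'a::ab_group_add \<Rightarrow> 'a) \<Rightarrow> ('a \<Rightarrow> 'a \<Rightarrow> 'a) \<Rightarrow> 'a set \<Rightarrow> nat \<Rightarrow> 'a set" where
  "derived_series sc br S 0 = S"
| "derived_series sc br S (Suc n) =
     lie_br_set sc br (derived_series sc br S n) (derived_series sc br S n)"

definition solvable :: "(complex \<Rightarrow> 'a::ab_group_add \<Rightarrow> 'a) \<Rightarrow> ('a \<Rightarrow> 'a \<Rightarrow> 'a) \<Rightarrow> 'a set \<Rightarrow> bool" where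
  "solvable sc br S \<longleftrightarrow> (\<exists>n. derived_series sc br S n = {0})"

definition semisimple :: "(complex \<Rightarrow> 'a::ab_group_add \<Rightarrow> 'a) \<Rightarrow> ('a \<Rightarrow> 'a \<Rightarrow> 'a) \<Rightarrow> bool" where
  "semisimple sc br \<longleftrightarrow> (\<forall>I. lie_ideal sc br I \<and> solvable sc br I \<longrightarrow> I = {0})"

text \<open>A Lie algebra homomorphism S -> C (S a subalgebra): a linear map on S
vanishing on the derived subalgebra [S,S].  Values outside S are irrelevant.\<close>
definition lie_hom_to_C :: "(complex \<Rightarrow> 'a::ab_group_add \<Rightarrow> 'a) \<Rightarrow> ('a \<Rightarrow> 'a \<Rightarrow> 'a) \<Rightarrow> 'a set \<Rightarrow> ('a \<Rightarrow> complex) \<Rightarrow> bool" where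
  "lie_hom_to_C sc br S f \<longleftrightarrow>
     (\<forall>x\<in>S. \<forall>y\<in>S. f (x + y) = f x + f y) \<and>
     (\<forall>c. \<forall>x\<in>S. f (sc c x) = c * f x) \<and>
     (\<forall>x\<in>lie_br_set sc br S S. f x = 0)"

definition whittaker_ann :: "('a \<Rightarrow> 'a \<Rightarrow> 'a) \<Rightarrow> 'a set \<Rightarrow> ('a \<Rightarrow> complex) \<Rightarrow> 'a set" where
  "whittaker_ann br P \<phi> = {g. \<forall>p\<in>P. \<phi> (br g p) = 0}"

definition extendable :: "(complex \<Rightarrow> 'a::ab_group_add \<Rightarrow> 'a) \<Rightarrow> ('a \<Rightarrow> 'a \<Rightarrow> 'a) \<Rightarrow> 'a set \<Rightarrow> ('a \<Rightarrow> complex) \<Rightarrow> bool" where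
  "extendable sc br P \<phi> \<longleftrightarrow>
     (\<exists>\<phi>'. lie_hom_to_C sc br (whittaker_ann br P \<phi>) \<phi>' \<and> (\<forall>x\<in>P. \<phi>' x = \<phi> x))"

end

theory Submission
  imports Defs
begin

lemma vs_complex: "vector_space ((*) :: complex \<Rightarrow> complex \<Rightarrow> complex)"
  by unfold_locales (auto simp: algebra_simps)

lemma extend_lemma:
  fixes sc :: "complex \<Rightarrow> 'a::ab_group_add \<Rightarrow> 'a"
  assumes vs: "vector_space sc"
    and P: "module.subspace sc P" and D: "module.subspace sc D"
    and add: "\<forall>x\<in>P. \<forall>y\<in>P. \<phi> (x + y) = \<phi> x + \<phi> y"
    and hom: "\<forall>c. \<forall>x\<in>P. \<phi> (sc c x) = c * \<phi> x"
    and int: "\<forall>x\<in>P \<inter> D. \<phi> x = 0"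
  shows "\<exists>g. Vector_Spaces.linear sc (*) g \<and> (\<forall>x\<in>P. g x = \<phi> x) \<and> (\<forall>x\<in>D. g x = 0)"
proof -
  interpret V: vector_space sc by (rule vs)
  interpret VP: vector_space_pair sc "(*) :: complex \<Rightarrow> complex \<Rightarrow> complex"
    using vs vs_complex by (simp add: vector_space_pair_def)
  have phi0: "\<phi> 0 = 0" using hom V.subspace_0[OF P] V.scale_zero_left[of 0] by (metis mult_zero_left)
  have phidiff: "\<phi> (p - q) = \<phi> p - \<phi> q" if "p \<in> P" "q \<in> P" for p q
  proof -
    have "p - q \<in> P" using V.subspace_diff[OF P that] .
    then have "\<phi> p = \<phi> (p - q) + \<phi> q" using add that by (metis diff_add_cancel)
    then show ?thesis by simp
  qed
  define S where "S = {x. \<exists>p\<in>P. \<exists>d\<in>D. x = p + d}"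
  define \<psi> where "\<psi> x = \<phi> (SOME p. p \<in> P \<and> x - p \<in> D)" for x
  have wd: "\<psi> x = \<phi> p" if "p \<in> P" "x - p \<in> D" for x p
  proof -
    let ?q = "SOME p. p \<in> P \<and> x - p \<in> D"
    have q: "?q \<in> P \<and> x - ?q \<in> D" by (rule someI[of _ p]) (use that in auto)
    have "p - ?q = (x - ?q) - (x - p)" by (simp add: algebra_simps)
    then have "p - ?q \<in> D" using V.subspace_diff[OF D, of "x - ?q" "x - p"] q that by simp
    moreover have "p - ?q \<in> P" using V.subspace_diff[OF P, of p ?q] q that by simp
    ultimately have "\<phi> (p - ?q) = 0" using int by blast
    then show ?thesis using phidiff[of p ?q] q that by (simp add: \<psi>_def)
  qed
  have Ssub: "V.subspace S"
    unfolding V.subspace_def S_def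
  proof (intro conjI ballI allI)
    have "(0::'a) = 0 + 0" by simp
    then show "0 \<in> {x. \<exists>p\<in>P. \<exists>d\<in>D. x = p + d}"
      using V.subspace_0[OF P] V.subspace_0[OF D] by blast
  next
    fix x y assume "x \<in> {x. \<exists>p\<in>P. \<exists>d\<in>D. x = p + d}" "y \<in> {x. \<exists>p\<in>P. \<exists>d\<in>D. x = p + d}"
    then obtain p d q e where "p \<in> P" "d \<in> D" "q \<in> P" "e \<in> D" "x = p + d" "y = q + e" by auto
    moreover have "x + y = (p + q) + (d + e)" using calculation by (simp add: algebra_simps)
    ultimately show "x + y \<in> {x. \<exists>p\<in>P. \<exists>d\<in>D. x = p + d}"
      using V.subspace_add[OF P, of p q] V.subspace_add[OF D, of d e] by blast
  next
    fix c x assume "x \<in> {x. \<exists>p\<in>P. \<exists>d\<in>D. x = p + d}"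
    then obtain p d where "p \<in> P" "d \<in> D" "x = p + d" by auto
    moreover have "sc c x = sc c p + sc c d" using calculation V.scale_right_distrib by simp
    ultimately show "sc c x \<in> {x. \<exists>p\<in>P. \<exists>d\<in>D. x = p + d}"
      using V.subspace_scale[OF P, of p c] V.subspace_scale[OF D, of d c] by blast
  qed
  obtain B where B: "{} \<subseteq> B" "B \<subseteq> S" "V.independent B" "S \<subseteq> V.span B"
    using V.maximal_independent_subset_extend[of "{}" S] V.independent_empty by auto
  obtain g where g: "Vector_Spaces.linear sc (*) g" "\<forall>x\<in>B. g x = \<psi> x"
    using VP.linear_independent_extend[OF B(3)] by blast
  interpret L: Vector_Spaces.linear sc "(*) :: complex \<Rightarrow> complex \<Rightarrow> complex" g by (rule g(1))
  let ?T = "{x \<in> S. g x = \<psi> x}"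
  have "V.subspace ?T"
    unfolding V.subspace_def
  proof (intro conjI ballI allI)
    have "(0::'a) \<in> S" using V.subspace_0[OF Ssub] .
    moreover have "\<psi> 0 = 0" using wd[of 0 0] V.subspace_0[OF P] V.subspace_0[OF D] phi0 by simp
    ultimately show "0 \<in> ?T" by simp
  next
    fix x y assume xy: "x \<in> ?T" "y \<in> ?T"
    then obtain p d q e where pq: "p \<in> P" "d \<in> D" "q \<in> P" "e \<in> D" "x = p + d" "y = q + e"
      by (auto simp: S_def)
    have "\<psi> x = \<phi> p" "\<psi> y = \<phi> q" using wd[of p x] wd[of q y] pq by auto
    moreover have "x + y - (p + q) = d + e" using pq by (simp add: algebra_simps)
    then have "\<psi> (x + y) = \<phi> (p + q)"
      using wd[of "p+q" "x+y"] pq V.subspace_add[OF P, of p q] V.subspace_add[OF D, of d e] by simp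
    moreover have "x + y \<in> S" using xy V.subspace_add[OF Ssub, of x y] by simp
    ultimately show "x + y \<in> ?T"
      using xy add pq L.add[of x y] by simp
  next
    fix c x assume x: "x \<in> ?T"
    then obtain p d where pq: "p \<in> P" "d \<in> D" "x = p + d" by (auto simp: S_def)
    have "\<psi> x = \<phi> p" using wd[of p x] pq by auto
    moreover have "sc c x - sc c p = sc c d" using pq V.scale_right_distrib by simp
    then have "\<psi> (sc c x) = \<phi> (sc c p)"
      using wd[of "sc c p" "sc c x"] pq V.subspace_scale[OF P, of p c] V.subspace_scale[OF D, of d c] by simp
    moreover have "sc c x \<in> S" using x V.subspace_scale[OF Ssub, of x c] by simp
    ultimately show "sc c x \<in> ?T"
      using x hom pq L.scale[of c x] by simp
  qed
  then have "V.span B \<subseteq> ?T" using B g(2) by (intro V.span_minimal) auto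
  then have agree: "\<And>x. x \<in> S \<Longrightarrow> g x = \<psi> x" using B by auto
  have "\<forall>x\<in>P. g x = \<phi> x"
  proof
    fix x assume x: "x \<in> P"
    have "x = x + 0" by simp
    then have "x \<in> S" using x V.subspace_0[OF D] unfolding S_def by blast
    then show "g x = \<phi> x" using agree wd[of x x] x V.subspace_0[OF D] by simp
  qed
  moreover have "\<forall>x\<in>D. g x = 0"
  proof
    fix x assume x: "x \<in> D"
    have "x = 0 + x" by simp
    then have "x \<in> S" using x V.subspace_0[OF P] unfolding S_def by blast
    then show "g x = 0" using agree wd[of 0 x] x V.subspace_0[OF P] phi0 by simp
  qed
  ultimately show ?thesis using g(1) by blast
qed

theorem proposition3p5:
  fixes sc :: "complex \<Rightarrow> 'a::ab_group_add \<Rightarrow> 'a"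
    and br :: "'a \<Rightarrow> 'a \<Rightarrow> 'a"
    and P :: "'a set"
    and \<phi> :: "'a \<Rightarrow> complex"
  assumes "lie_algebra sc br"
    and "fin_dim_lie sc"
    and "\<not> semisimple sc br"
    and "lie_ideal sc br P"
    and "\<not> perfect sc br P"
    and "lie_hom_to_C sc br P \<phi>"
  shows "extendable sc br P \<phi> \<longleftrightarrow>
           lie_br_set sc br (whittaker_ann br P \<phi>) (whittaker_ann br P \<phi>) \<inter> P
             \<subseteq> {x \<in> P. \<phi> x = 0}"
proof -
  have vs: "vector_space sc" using assms(1) by (simp add: lie_algebra_def)
  interpret V: vector_space sc by (rule vs)
  let ?W = "whittaker_ann br P \<phi>"
  let ?D = "lie_br_set sc br ?W ?W"
  have Psub: "V.subspace P" using assms(4) by (simp add: lie_ideal_def)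
  have hom: "\<forall>x\<in>P. \<forall>y\<in>P. \<phi> (x + y) = \<phi> x + \<phi> y" "\<forall>c. \<forall>x\<in>P. \<phi> (sc c x) = c * \<phi> x"
    "\<forall>x\<in>lie_br_set sc br P P. \<phi> x = 0"
    using assms(6) by (auto simp: lie_hom_to_C_def)
  have PW: "P \<subseteq> ?W"
  proof
    fix p assume p: "p \<in> P"
    have "\<forall>q\<in>P. br p q \<in> lie_br_set sc br P P"
      using p unfolding lie_br_set_def by (blast intro: V.span_base)
    then show "p \<in> ?W" using hom(3) by (auto simp: whittaker_ann_def)
  qed
  show ?thesis
  proof
    assume "extendable sc br P \<phi>"
    then obtain \<phi>' where h: "lie_hom_to_C sc br ?W \<phi>'" "\<forall>x\<in>P. \<phi>' x = \<phi> x"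
      by (auto simp: extendable_def)
    then show "?D \<inter> P \<subseteq> {x \<in> P. \<phi> x = 0}" by (auto simp: lie_hom_to_C_def)
  next
    assume a: "?D \<inter> P \<subseteq> {x \<in> P. \<phi> x = 0}"
    have Dsub: "V.subspace ?D" by (simp add: lie_br_set_def)
    obtain g where g: "Vector_Spaces.linear sc (*) g" "\<forall>x\<in>P. g x = \<phi> x" "\<forall>x\<in>?D. g x = 0"
      using extend_lemma[OF vs Psub Dsub hom(1) hom(2)] a by blast
    interpret VC: vector_space "(*) :: complex \<Rightarrow> complex \<Rightarrow> complex" by (rule vs_complex)
    interpret L: Vector_Spaces.linear sc "(*) :: complex \<Rightarrow> complex \<Rightarrow> complex" g by (rule g(1))
    have "lie_hom_to_C sc br ?W g"
      unfolding lie_hom_to_C_def using g(3) L.add L.scale by auto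
    then show "extendable sc br P \<phi>" unfolding extendable_def using g(2) by blast
  qed
qed

end
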